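(* Consider a spacecraft moving on a hyperbolic flyby trajectory past the earth under Newtonian gravity plus the small perturbing force (per unit mass) \[ F = 2\omega_\oplus R_\oplus \left[ \frac{2GM_\oplus}{r^2} \cos \delta ~\hat{e}_r + \frac{v^2}{r} \sin \delta ~\hat{e}_\delta \right]. \] Then, to leading order in the perturbation, the differential $\Delta v_\infty$ between the outgoing asymptotic speed $v_1$ and the incoming asymptotic speed $v_0$ satisfies \[ \frac{\Delta v_\infty}{v_\infty} = 2 \omega_\oplus R_\oplus \left( \cos \delta_0 - \cos \delta_1 \right). \]
   Context: Units with $c=1$. Spherical coordinates centered on the earth: radius $r$, declination $\delta$ (measured from the equatorial plane), azimuth $\phi$; $\hat{e}_r$, $\hat{e}_\delta$ are the orthonormal radial and declination unit vectors. $\omega_\oplus$ is the earth's rotational angular velocity, $R_\oplus$ its radius, $M_\oplus$ its mass, $G$ Newton's constant. $v$ denotes the spacecraft's speed and $\mathbf{v}$ its velocity; $v_\infty$ its asymptotic speed. $\delta_0$ and $\delta_1$ are the declinations of the planes (through the spacecraft and the earth's center of mass) containing the incoming resp. outgoing asymptotic velocity vectors. The energy per unit mass $E = \frac{1}{2}v^2 - \frac{GM_\oplus}{r}$ is approximately conserved, and $\Delta v_\infty/v_\infty = \Delta E/(2E)$ with $\Delta E = \int_{-\infty}^{\infty} \mathbf{F}\cdot\mathbf{v}\,dt$. This force law is the paper's derived post-Einsteinian correction (from an inertial frame dragging linear in the earth's rotational velocity) after dropping terms shown not to contribute; the resulting formula is Anderson et al.'s semi-empirical flyby-anomaly prediction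 formula. *)

theory Defs
  imports "HOL-Analysis.Analysis"
begin

text \<open>Earth-centred spherical coordinates: radius r, declination d (angle from the
  equatorial plane), azimuth ph. Points of space are vectors in real^3.\<close>

definition sph_pos :: "real \<Rightarrow> real \<Rightarrow> real \<Rightarrow> real^3" where
  "sph_pos r d ph = vector [r * cos d * cos ph, r * cos d * sin ph, r * sin d]"

definition e_rad :: "real \<Rightarrow> real \<Rightarrow> real^3" where
  "e_rad d ph = vector [cos d * cos ph, cos d * sin ph, sin d]"

definition e_decl :: "real \<Rightarrow> real \<Rightarrow> real^3" where
  "e_decl d ph = vector [- sin d * cos ph, - sin d * sin ph, cos d]"

definition flyby_force ::
  "real \<Rightarrow> real \<Rightarrow> real \<Rightarrow> real \<Rightarrow> real \<Rightarrow> real \<Rightarrow> real \<Rightarrow> real \<Rightarrow> real^3" where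
  "flyby_force w R G M r d ph s =
     (2 * w * R) *\<^sub>R ((2 * G * M / r^2 * cos d) *\<^sub>R e_rad d ph
                       + (s^2 / r * sin d) *\<^sub>R e_decl d ph)"

end

theory Submission
  imports Defs
begin

lemma comp_deriv:
  fixes f :: "real \<Rightarrow> real^3"
  assumes "(f has_vector_derivative D) (at t)"
  shows "((\<lambda>t. f t $ i) has_real_derivative D $ i) (at t)"
  using bounded_linear.has_vector_derivative[OF bounded_linear_vec_nth assms, of i]
  by (simp add: has_real_derivative_iff_has_vector_derivative)

theorem proposition3p1:
  fixes w R G M E d0 d1 :: real
    and r d ph :: "real \<Rightarrow> real"
    and v acc :: "real \<Rightarrow> real^3"
  assumes G_pos: "G > 0" and M_pos: "M > 0"
    and r_pos: "\<And>t. r t > 0"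
    and r_diff: "\<And>t. r differentiable (at t)"
    and d_diff: "\<And>t. d differentiable (at t)"
    and ph_diff: "\<And>t. ph differentiable (at t)"
    and vel: "\<And>t. ((\<lambda>t. sph_pos (r t) (d t) (ph t)) has_vector_derivative v t) (at t)"
    and newton: "\<And>t. (v has_vector_derivative (- (G * M / (r t)^3)) *\<^sub>R sph_pos (r t) (d t) (ph t)) (at t)"
    and energy: "E = (norm (v 0))^2 / 2 - G * M / r 0"
    and hyperbolic: "E > 0"
    and r_inf_in: "filterlim r at_top at_bot"
    and r_inf_out: "filterlim r at_top at_top"
    and decl_in: "(d \<longlongrightarrow> d0) at_bot"
    and decl_out: "(d \<longlongrightarrow> d1) at_top"
  shows "((\<lambda>(a, b). integral {a..b}
             (\<lambda>t. flyby_force w R G M (r t) (d t) (ph t) (norm (v t)) \<bullet> v t) / (2 * E))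
           \<longlongrightarrow> 2 * w * R * (cos d0 - cos d1)) (at_bot \<times>\<^sub>F at_top)"
proof -
  define r' where "r' = deriv r"
  define d' where "d' = deriv d"
  define p' where "p' = deriv ph"
  have Dr: "\<And>t. (r has_real_derivative r' t) (at t)"
    using r_diff by (simp add: r'_def DERIV_deriv_iff_real_differentiable)
  have Dd: "\<And>t. (d has_real_derivative d' t) (at t)"
    using d_diff by (simp add: d'_def DERIV_deriv_iff_real_differentiable)
  have Dp: "\<And>t. (ph has_real_derivative p' t) (at t)"
    using ph_diff by (simp add: p'_def DERIV_deriv_iff_real_differentiable)
  have v1: "v t $ 1 = r' t * cos (d t) * cos (ph t) - r t * sin (d t) * d' t * cos (ph t)
      - r t * cos (d t) * sin (ph t) * p' t" for t
  proof -
    have A: "((\<lambda>t. r t * cos (d t) * cos (ph t)) has_real_derivative v t $ 1) (at t)"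
      using comp_deriv[OF vel[of t], of 1] by (simp add: sph_pos_def)
    have B: "((\<lambda>t. r t * cos (d t) * cos (ph t)) has_real_derivative
       r' t * cos (d t) * cos (ph t) - r t * sin (d t) * d' t * cos (ph t)
      - r t * cos (d t) * sin (ph t) * p' t) (at t)"
      by (auto intro!: derivative_eq_intros Dr Dd Dp simp: algebra_simps)
    show ?thesis using DERIV_unique[OF A B] .
  qed
  have v2: "v t $ 2 = r' t * cos (d t) * sin (ph t) - r t * sin (d t) * d' t * sin (ph t)
      + r t * cos (d t) * cos (ph t) * p' t" for t
  proof -
    have A: "((\<lambda>t. r t * cos (d t) * sin (ph t)) has_real_derivative v t $ 2) (at t)"
      using comp_deriv[OF vel[of t], of 2] by (simp add: sph_pos_def)
    have B: "((\<lambda>t. r t * cos (d t) * sin (ph t)) has_real_derivative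
       r' t * cos (d t) * sin (ph t) - r t * sin (d t) * d' t * sin (ph t)
      + r t * cos (d t) * cos (ph t) * p' t) (at t)"
      by (auto intro!: derivative_eq_intros Dr Dd Dp simp: algebra_simps)
    show ?thesis using DERIV_unique[OF A B] .
  qed
  have v3: "v t $ 3 = r' t * sin (d t) + r t * cos (d t) * d' t" for t
  proof -
    have A: "((\<lambda>t. r t * sin (d t)) has_real_derivative v t $ 3) (at t)"
      using comp_deriv[OF vel[of t], of 3] by (simp add: sph_pos_def)
    have B: "((\<lambda>t. r t * sin (d t)) has_real_derivative
       r' t * sin (d t) + r t * cos (d t) * d' t) (at t)"
      by (auto intro!: derivative_eq_intros Dr Dd Dp simp: algebra_simps)
    show ?thesis using DERIV_unique[OF A B] .
  qed
  have nv: "(norm (v t))^2 = (v t $ 1)^2 + (v t $ 2)^2 + (v t $ 3)^2" for t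
    unfolding power2_norm_eq_inner inner_vec_def sum_3 by (simp add: power2_eq_square)
  define H where "H t = ((v t $ 1)^2 + (v t $ 2)^2 + (v t $ 3)^2) / 2 - G * M / r t" for t
  have DH: "(H has_real_derivative 0) (at t)" for t
  proof -
    let ?k = "- (G * M / (r t)^3)"
    have a: "((\<lambda>t. v t $ i) has_real_derivative ?k * sph_pos (r t) (d t) (ph t) $ i) (at t)" for i
      using comp_deriv[OF newton[of t], of i] by simp
    have "(H has_real_derivative
       (2 * v t $ 1 * (?k * (r t * cos (d t) * cos (ph t)))
      + 2 * v t $ 2 * (?k * (r t * cos (d t) * sin (ph t)))
      + 2 * v t $ 3 * (?k * (r t * sin (d t)))) / 2 + G * M * r' t / (r t)^2) (at t)"
      unfolding H_def using a[of 1] a[of 2] a[of 3] r_pos[of t]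
      by (auto intro!: derivative_eq_intros Dr simp: sph_pos_def power2_eq_square mult_ac)
    moreover have "(2 * v t $ 1 * (?k * (r t * cos (d t) * cos (ph t)))
      + 2 * v t $ 2 * (?k * (r t * cos (d t) * sin (ph t)))
      + 2 * v t $ 3 * (?k * (r t * sin (d t)))) / 2 + G * M * r' t / (r t)^2 = 0"
    proof -
      have s1: "sin (d t)^2 + cos (d t)^2 = 1" and s2: "sin (ph t)^2 + cos (ph t)^2 = 1" by simp_all
      have "v t $ 1 * (r t * cos (d t) * cos (ph t)) + v t $ 2 * (r t * cos (d t) * sin (ph t))
         + v t $ 3 * (r t * sin (d t)) = r t * r' t"
        unfolding v1 v2 v3 using s1 s2 by algebra
      then show ?thesis using r_pos[of t]
        by (simp add: field_simps power2_eq_square power3_eq_cube) algebra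
    qed
    ultimately show ?thesis by simp
  qed
  have Hc: "H t = E" for t
    using DERIV_isconst_all[of H t 0] DH energy nv[of 0] unfolding H_def by auto
  have nvE: "(norm (v t))^2 = 2 * E + 2 * G * M / r t" for t
    using Hc[of t] nv[of t] unfolding H_def by (simp add: field_simps)
  define f where "f t = 2 * w * R * (2 * G * M * cos (d t) * r' t / (r t)^2
     + (2 * E + 2 * G * M / r t) * sin (d t) * d' t)" for t
  have fv: "flyby_force w R G M (r t) (d t) (ph t) (norm (v t)) \<bullet> v t = f t" for t
  proof -
    have s1: "sin (d t)^2 + cos (d t)^2 = 1" and s2: "sin (ph t)^2 + cos (ph t)^2 = 1" by simp_all
    have er: "e_rad (d t) (ph t) \<bullet> v t = r' t"
      unfolding e_rad_def inner_vec_def sum_3 vector_3 v1 v2 v3 inner_real_def using s1 s2 by algebra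
    have ed: "e_decl (d t) (ph t) \<bullet> v t = r t * d' t"
      unfolding e_decl_def inner_vec_def sum_3 vector_3 v1 v2 v3 inner_real_def using s1 s2 by algebra
    show ?thesis unfolding flyby_force_def inner_add_left inner_scaleR_left er ed nvE f_def
      using r_pos[of t] by (simp add: field_simps power2_eq_square)
  qed
  define \<Phi> where "\<Phi> t = 2 * w * R * (- 2 * E * cos (d t) - 2 * G * M * cos (d t) / r t)" for t
  have DPhi: "(\<Phi> has_real_derivative f t) (at t)" for t
    unfolding \<Phi>_def f_def using r_pos[of t]
    by (auto intro!: derivative_eq_intros Dr Dd simp: field_simps power2_eq_square)
  have int: "integral {a..b} (\<lambda>t. flyby_force w R G M (r t) (d t) (ph t) (norm (v t)) \<bullet> v t)
      = \<Phi> b - \<Phi> a" if "a \<le> b" for a b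
  proof -
    have "(f has_integral \<Phi> b - \<Phi> a) {a..b}"
      by (rule fundamental_theorem_of_calculus[OF that])
        (auto intro: DERIV_subset[OF DPhi]
          simp: has_real_derivative_iff_has_vector_derivative[symmetric])
    then show ?thesis unfolding fv by (rule integral_unique)
  qed
  define g where "g = (\<lambda>(a::real, b::real). 2 * w * R * ((cos (d a) - cos (d b))
      + (G * M / E) * (cos (d a) * inverse (r a) - cos (d b) * inverse (r b))))"
  have ev: "\<forall>\<^sub>F x in at_bot \<times>\<^sub>F at_top. g x = (\<lambda>(a, b). integral {a..b}
             (\<lambda>t. flyby_force w R G M (r t) (d t) (ph t) (norm (v t)) \<bullet> v t) / (2 * E)) x"
  proof -
    have "\<forall>\<^sub>F x::real\<times>real in at_bot \<times>\<^sub>F at_top. fst x \<le> 0 \<and> 0 \<le> snd x"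
      unfolding eventually_prod_filter
      by (rule exI[of _ "\<lambda>a. a \<le> 0"], rule exI[of _ "\<lambda>b. 0 \<le> b"])
         (auto simp: eventually_at_bot_linorder eventually_at_top_linorder)
    then show ?thesis
    proof (rule eventually_mono)
      fix x :: "real \<times> real" assume "fst x \<le> 0 \<and> 0 \<le> snd x"
      then obtain a b where x: "x = (a, b)" "a \<le> b" by (cases x) auto
      show "g x = (\<lambda>(a, b). integral {a..b}
             (\<lambda>t. flyby_force w R G M (r t) (d t) (ph t) (norm (v t)) \<bullet> v t) / (2 * E)) x"
      proof -
        have E0: "E \<noteq> 0" using hyperbolic by simp
        have "\<Phi> b - \<Phi> a = 2 * E * g (a, b)"
          unfolding g_def \<Phi>_def using E0 r_pos[of a] r_pos[of b]
          by (simp add: field_simps)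
        then show ?thesis unfolding x(1) using int[OF x(2)] E0 by simp
      qed
    qed
  qed
  have lim: "(g \<longlongrightarrow> 2 * w * R * ((cos d0 - cos d1) + (G * M / E) * (cos d0 * 0 - cos d1 * 0)))
      (at_bot \<times>\<^sub>F at_top)"
  proof -
    have ca: "((\<lambda>x::real\<times>real. cos (d (fst x))) \<longlongrightarrow> cos d0) (at_bot \<times>\<^sub>F at_top)"
      by (rule tendsto_cos, rule filterlim_compose[OF decl_in filterlim_fst])
    have cb: "((\<lambda>x::real\<times>real. cos (d (snd x))) \<longlongrightarrow> cos d1) (at_bot \<times>\<^sub>F at_top)"
      by (rule tendsto_cos, rule filterlim_compose[OF decl_out filterlim_snd])
    have ia: "((\<lambda>x::real\<times>real. inverse (r (fst x))) \<longlongrightarrow> 0) (at_bot \<times>\<^sub>F at_top)"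
      by (rule tendsto_inverse_0_at_top, rule filterlim_compose[OF r_inf_in filterlim_fst])
    have ib: "((\<lambda>x::real\<times>real. inverse (r (snd x))) \<longlongrightarrow> 0) (at_bot \<times>\<^sub>F at_top)"
      by (rule tendsto_inverse_0_at_top, rule filterlim_compose[OF r_inf_out filterlim_snd])
    have "((\<lambda>x::real\<times>real. 2 * w * R * ((cos (d (fst x)) - cos (d (snd x)))
      + (G * M / E) * (cos (d (fst x)) * inverse (r (fst x)) - cos (d (snd x)) * inverse (r (snd x)))))
      \<longlongrightarrow> 2 * w * R * ((cos d0 - cos d1) + (G * M / E) * (cos d0 * 0 - cos d1 * 0)))
      (at_bot \<times>\<^sub>F at_top)"
      by (intro tendsto_intros ca cb ia ib)
    then show ?thesis unfolding g_def case_prod_unfold by simp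
  qed
  show ?thesis using tendsto_cong[OF ev] lim by simp
qed

end
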